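(* Let $n\ge2$ and let $F:\mathbf{R}^n\to\mathbf{R}$ be an integrand. Then $\mathcal{D}(F)(v)=\|v\|_F$ for every $v\in\mathbf{R}^n$.
   Context: $\mathbb{S}^{n-1}$ is the unit sphere. An integrand is a lower semicontinuous $F:\mathbf{R}^n\to\mathbf{R}$ with $F(\lambda x)=\lambda F(x)$ for $\lambda\ge0$ and $F>0$ on $\mathbb{S}^{n-1}$. $K_F:=\bigcap_{v\in\mathbb{S}^{n-1}}\{z:\langle z,v\rangle\le F(v)\}$; $\mathfrak{P}\Omega:=\{z:\langle z,x\rangle\le1\ \forall x\in\Omega\}$; $\|z\|_F:=\min\{\lambda\ge0: z\in\lambda\,\mathfrak{P}K_F\}$. $\mathcal{W}(F)(v):=\inf_{w\in\mathbb{S}^{n-1},\langle v,w\rangle>0}F(w)/\langle v,w\rangle$, $\mathcal{A}(G)(v):=\sup_{w\in\mathbb{S}^{n-1}}G(w)\langle v,w\rangle$ for $v\in\mathbb{S}^{n-1}$, extended by 1-homogeneity; $\mathcal{D}(F):=\mathcal{A}(\mathcal{W}(F))$. *)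

theory Defs
  imports "HOL-Analysis.Analysis"
begin

definition lower_semicont :: "('a::topological_space \<Rightarrow> real) \<Rightarrow> bool" where
  "lower_semicont F \<longleftrightarrow> (\<forall>x t. t < F x \<longrightarrow> (\<forall>\<^sub>F y in at x. t < F y))"

definition integrand :: "('a::euclidean_space \<Rightarrow> real) \<Rightarrow> bool" where
  "integrand F \<longleftrightarrow> lower_semicont F
     \<and> (\<forall>x. \<forall>l\<ge>0. F (l *\<^sub>R x) = l * F x)
     \<and> (\<forall>v\<in>sphere 0 1. F v > 0)"

definition wulff_K :: "('a::euclidean_space \<Rightarrow> real) \<Rightarrow> 'a set" where
  "wulff_K F = (\<Inter>v\<in>sphere 0 1. {z. inner z v \<le> F v})"

definition polar_set :: "'a::euclidean_space set \<Rightarrow> 'a set" where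
  "polar_set \<Omega> = {z. \<forall>x\<in>\<Omega>. inner z x \<le> 1}"

definition F_norm :: "('a::euclidean_space \<Rightarrow> real) \<Rightarrow> 'a \<Rightarrow> real" where
  "F_norm F z = Inf {l. l \<ge> 0 \<and> z \<in> (\<lambda>y. l *\<^sub>R y) ` polar_set (wulff_K F)}"

definition hom_ext :: "('a::euclidean_space \<Rightarrow> real) \<Rightarrow> 'a \<Rightarrow> real" where
  "hom_ext f v = (if v = 0 then 0 else norm v * f (v /\<^sub>R norm v))"

definition W_op :: "('a::euclidean_space \<Rightarrow> real) \<Rightarrow> 'a \<Rightarrow> real" where
  "W_op F = hom_ext (\<lambda>v. INF w\<in>{w\<in>sphere 0 1. inner v w > 0}. F w / inner v w)"

definition A_op :: "('a::euclidean_space \<Rightarrow> real) \<Rightarrow> 'a \<Rightarrow> real" where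
  "A_op G = hom_ext (\<lambda>v. SUP w\<in>sphere 0 1. G w * inner v w)"

definition D_op :: "('a::euclidean_space \<Rightarrow> real) \<Rightarrow> 'a \<Rightarrow> real" where
  "D_op F = A_op (W_op F)"

end

theory Submission
  imports Defs
begin

lemma lsc_lower_bound:
  fixes F :: "'a::euclidean_space \<Rightarrow> real"
  assumes "lower_semicont F" and pos: "\<forall>v\<in>sphere 0 1. F v > 0"
  shows "\<exists>m>0. \<forall>w\<in>sphere 0 1. m \<le> F w"
proof -
  have "\<exists>U. open U \<and> x \<in> U \<and> (\<forall>y\<in>U. F x / 2 < F y)" if "x \<in> sphere 0 1" for x
  proof -
    have fx: "F x / 2 < F x" using pos that by auto
    then have "\<forall>\<^sub>F y in at x. F x / 2 < F y" using assms(1) unfolding lower_semicont_def by blast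
    then obtain U where "open U" "x \<in> U" "\<forall>y\<in>U. y \<noteq> x \<longrightarrow> F x / 2 < F y"
      unfolding eventually_at_topological by blast
    then show ?thesis using fx by (intro exI[of _ U]) auto
  qed
  then obtain U where U: "\<And>x. x \<in> sphere 0 1 \<Longrightarrow> open (U x) \<and> x \<in> U x \<and> (\<forall>y\<in>U x. F x / 2 < F y)"
    by metis
  have "sphere (0::'a) 1 \<subseteq> (\<Union>c\<in>sphere 0 1. U c)" using U by blast
  then obtain C where C: "C \<subseteq> sphere 0 1" "finite C" "sphere (0::'a) 1 \<subseteq> (\<Union>c\<in>C. U c)"
    using compactE_image[of "sphere (0::'a) 1" "sphere 0 1" U] U by (metis compact_sphere)
  have ne: "sphere (0::'a) 1 \<noteq> {}" by simp
  then have Cne: "C \<noteq> {}" using C by blast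
  define m where "m = Min ((\<lambda>x. F x / 2) ` C)"
  have "m > 0" unfolding m_def using C Cne pos by (subst Min_gr_iff) auto
  moreover have "m \<le> F w" if w: "w \<in> sphere 0 1" for w
  proof -
    obtain c where c: "c \<in> C" "w \<in> U c" using C w by blast
    have "m \<le> F c / 2" unfolding m_def using C c by (intro Min_le) auto
    also have "\<dots> < F w" using U[of c] c C by auto
    finally show ?thesis by simp
  qed
  ultimately show ?thesis by blast
qed

theorem corollary3p2:
  fixes F :: "'a::euclidean_space \<Rightarrow> real"
  assumes "DIM('a) \<ge> 2"
    and "integrand F"
  shows "\<forall>v. D_op F v = F_norm F v"
proof
  fix v :: 'a
  have lsc: "lower_semicont F" and pos: "\<forall>v\<in>sphere 0 1. F v > 0"
    using assms(2) unfolding integrand_def by auto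
  obtain m where m: "m > 0" "\<forall>w\<in>sphere 0 1. m \<le> F w"
    using lsc_lower_bound[OF lsc pos] by blast
  define S where "S = sphere (0::'a) 1"
  define K where "K = wulff_K F"
  define g where "g = (\<lambda>v. INF w\<in>{w\<in>sphere 0 1. inner v w > 0}. F w / inner v w)"
  define \<rho> where "\<rho> = W_op F"
  have rho_g: "\<rho> w = g w" if "w \<in> S" for w
    using that unfolding \<rho>_def W_op_def hom_ext_def g_def S_def by auto
  have Kmem: "z \<in> K \<longleftrightarrow> (\<forall>v\<in>S. inner z v \<le> F v)" for z
    unfolding K_def wulff_K_def S_def by auto
  have setne: "w \<in> {w'\<in>sphere 0 1. inner w w' > 0}" if "w \<in> S" for w
    using that by (auto simp: S_def inner_commute dot_square_norm)
  have bdd: "bdd_below ((\<lambda>w'. F w' / inner w w') ` {w'\<in>sphere 0 1. inner w w' > 0})" for w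
    using pos by (intro bdd_belowI2[of _ 0]) (auto intro!: divide_nonneg_pos less_imp_le)
  have rho_ge: "m \<le> \<rho> w" if w: "w \<in> S" for w
  proof -
    have "m \<le> F w' / inner w w'" if "w' \<in> sphere 0 1" "inner w w' > 0" for w'
    proof -
      have "inner w w' \<le> norm w * norm w'" by (rule norm_cauchy_schwarz)
      then have le1: "inner w w' \<le> 1" using w that by (simp add: S_def)
      have "F w' \<le> F w' / inner w w'" using le1 that pos
        by (simp add: le_divide_eq)
      then show ?thesis using m that by force
    qed
    then show ?thesis unfolding rho_g[OF w] g_def using setne[OF w]
      by (intro cINF_greatest) auto
  qed
  have rho_ub: "norm z \<le> \<rho> (z /\<^sub>R norm z)" if z: "z \<in> K" "z \<noteq> 0" for z
  proof -
    define w where "w = z /\<^sub>R norm z"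
    have wS: "w \<in> S" using z by (simp add: S_def w_def)
    have zw: "z = norm z *\<^sub>R w" using z by (simp add: w_def)
    have "norm z \<le> F w' / inner w w'" if "w' \<in> sphere 0 1" "inner w w' > 0" for w'
    proof -
      have "inner z w' \<le> F w'" using z that Kmem by (auto simp: S_def)
      also have "inner z w' = norm z * inner w w'" by (subst zw) simp
      finally show ?thesis using that by (simp add: le_divide_eq)
    qed
    then show ?thesis unfolding w_def[symmetric] rho_g[OF wS] g_def using setne[OF wS]
      by (intro cINF_greatest) auto
  qed
  have rho_in: "\<rho> w *\<^sub>R w \<in> K" if w: "w \<in> S" for w
    unfolding Kmem
  proof
    fix v' assume v': "v' \<in> S"
    show "inner (\<rho> w *\<^sub>R w) v' \<le> F v'"
    proof (cases "inner w v' > 0")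
      case True
      have "\<rho> w \<le> F v' / inner w v'" unfolding rho_g[OF w] g_def
        using v' True by (intro cINF_lower[OF bdd]) (auto simp: S_def)
      then show ?thesis using True by (simp add: le_divide_eq)
    next
      case False
      have "0 \<le> \<rho> w" using rho_ge[OF w] m by simp
      then have "inner (\<rho> w *\<^sub>R w) v' \<le> 0" using False
        by (simp add: mult_nonneg_nonpos)
      also have "0 < F v'" using pos v' by (simp add: S_def)
      finally show ?thesis by simp
    qed
  qed
  define B where "B = (\<Sum>i\<in>Basis. max (F i) (F (- i)))"
  have Kbd: "norm z \<le> B" if z: "z \<in> K" for z
  proof -
    have "norm z \<le> (\<Sum>i\<in>Basis. \<bar>inner z i\<bar>)" by (rule norm_le_l1)
    also have "\<dots> \<le> B" unfolding B_def
    proof (rule sum_mono)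
      fix i :: 'a assume i: "i \<in> Basis"
      have "inner z i \<le> F i" using z i Kmem by (auto simp: S_def)
      moreover have "- i \<in> sphere 0 1" using i by simp
      then have "inner z (- i) \<le> F (- i)" using z Kmem unfolding S_def by blast
      ultimately show "\<bar>inner z i\<bar> \<le> max (F i) (F (- i))" by auto
    qed
    finally show ?thesis .
  qed
  have rho_bd: "\<rho> w \<le> B" if w: "w \<in> S" for w
  proof -
    have "\<rho> w \<ge> 0" using rho_ge[OF w] m by simp
    then have "\<rho> w = norm (\<rho> w *\<^sub>R w)" using w by (simp add: S_def)
    also have "\<dots> \<le> B" by (rule Kbd[OF rho_in[OF w]])
    finally show ?thesis .
  qed
  show "D_op F v = F_norm F v"
  proof (cases "v = 0")
    case True
    have "{l. l \<ge> 0 \<and> (0::'a) \<in> (\<lambda>y. l *\<^sub>R y) ` polar_set (wulff_K F)} = {0..}"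
      by (auto simp: polar_set_def image_iff intro!: exI[of _ 0])
    then show ?thesis using True
      by (simp add: D_op_def A_op_def hom_ext_def F_norm_def)
  next
    case False
    define u where "u = v /\<^sub>R norm v"
    have uS: "u \<in> S" using False by (simp add: S_def u_def)
    have vu: "v = norm v *\<^sub>R u" using False by (simp add: u_def)
    define sp where "sp = (SUP w\<in>S. \<rho> w * inner u w)"
    define h where "h = norm v * sp"
    have D: "D_op F v = h"
      using False unfolding D_op_def A_op_def hom_ext_def h_def sp_def u_def \<rho>_def S_def by simp
    have bddS: "bdd_above ((\<lambda>w. \<rho> w * inner u w) ` S)"
    proof (rule bdd_aboveI2[where M = B])
      fix w assume w: "w \<in> S"
      have "inner u w \<le> norm u * norm w" by (rule norm_cauchy_schwarz)
      then have "inner u w \<le> 1" using uS w by (simp add: S_def)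
      moreover have "\<rho> w * inner u w \<le> \<rho> w * 1" if "inner u w \<ge> 0"
        using \<open>inner u w \<le> 1\<close> rho_ge[OF w] m by (intro mult_left_mono) auto
      moreover have "\<rho> w * inner u w \<le> 0" if "inner u w < 0"
        using rho_ge[OF w] m that by (simp add: mult_nonneg_nonpos)
      ultimately show "\<rho> w * inner u w \<le> B" using rho_bd[OF w] rho_ge[OF w] m
        by (cases "inner u w \<ge> 0") linarith+
    qed
    have sp_ge: "\<rho> w * inner u w \<le> sp" if "w \<in> S" for w
      unfolding sp_def using that bddS by (rule cSUP_upper)
    have "\<rho> u * inner u u \<le> sp" by (rule sp_ge[OF uS])
    then have "m \<le> sp" using rho_ge[OF uS] uS by (simp add: S_def dot_square_norm)
    then have hpos: "h > 0" unfolding h_def using m False by simp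
    have Sne: "S \<noteq> {}" using uS by blast
    define L where "L = {l. l \<ge> 0 \<and> v \<in> (\<lambda>y. l *\<^sub>R y) ` polar_set K}"
    have hL: "h \<in> L"
    proof -
      have "inner v x \<le> h" if x: "x \<in> K" for x
      proof (cases "x = 0")
        case True then show ?thesis using hpos by simp
      next
        case xn: False
        define w where "w = x /\<^sub>R norm x"
        have wS: "w \<in> S" using xn by (simp add: S_def w_def)
        have xw: "inner v x = norm x * inner v w" using xn by (simp add: w_def)
        show ?thesis
        proof (cases "inner v w \<le> 0")
          case True
          then have "inner v x \<le> 0" using xw by (simp add: mult_nonneg_nonpos)
          then show ?thesis using hpos by simp
        next
          case False
          have "norm x * inner v w \<le> \<rho> w * inner v w"
            using rho_ub[OF x xn] False by (intro mult_right_mono) (auto simp: w_def)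
          also have "\<rho> w * inner v w = norm v * (\<rho> w * inner u w)"
            by (subst vu) simp
          also have "\<dots> \<le> norm v * sp" using sp_ge[OF wS] by (intro mult_left_mono) auto
          finally show ?thesis using xw h_def by simp
        qed
      qed
      then have "v /\<^sub>R h \<in> polar_set K" using hpos
        by (auto simp: polar_set_def field_simps)
      moreover have "v = h *\<^sub>R (v /\<^sub>R h)" using hpos by simp
      ultimately show ?thesis unfolding L_def using hpos by (auto simp: image_iff intro!: bexI[of _ "v /\<^sub>R h"])
    qed
    have hlow: "h \<le> l" if l: "l \<in> L" for l
    proof -
      obtain y where y: "y \<in> polar_set K" "v = l *\<^sub>R y" "l \<ge> 0" using l unfolding L_def by auto
      have "l \<noteq> 0" using y False by auto
      then have lpos: "l > 0" using y by simp
      have "\<rho> w * inner u w \<le> l / norm v" if w: "w \<in> S" for w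
      proof -
        have "inner y (\<rho> w *\<^sub>R w) \<le> 1" using y(1) rho_in[OF w] by (auto simp: polar_set_def)
        then have "inner v (\<rho> w *\<^sub>R w) \<le> l" using lpos y(2) by (simp add: mult_left_le)
        then have "norm v * (\<rho> w * inner u w) \<le> l" by (subst (asm) vu) (simp add: algebra_simps)
        then show ?thesis using False by (simp add: le_divide_eq mult.commute)
      qed
      then have "sp \<le> l / norm v" unfolding sp_def using Sne by (intro cSUP_least) auto
      then show ?thesis unfolding h_def using False by (simp add: le_divide_eq mult.commute)
    qed
    have "F_norm F v = Inf L" unfolding F_norm_def L_def K_def ..
    also have "Inf L = h" using hL hlow by (intro cInf_eq_minimum) auto
    finally show ?thesis using D by simp
  qed
qed

end
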